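(* Let $N$ be a phylogenetic network with $k$ reticulations at the top. Then there is a sequence of at most $k$ valid head moves transforming $N$ into a network with $k$ reticulations neatly at the top, such that the part of the network below the nodes $a_k$ and $b_k$ is not altered.
   Context: A (binary) phylogenetic network on a finite label set $X$ ($|X|\ge 2$) is a directed acyclic graph without parallel edges having exactly one root (indegree 0, outdegree 1), exactly $|X|$ leaves (indegree 1, outdegree 0) bijectively labelled by $X$, and all other nodes are either split nodes (indegree 1, outdegree 2) or reticulations (indegree 2, outdegree 1). A network has $k$ reticulations at the top if it contains: the child $c$ of the root; nodes $a_i,b_i$ and an edge $(a_i,b_i)$ for each $i\in\{1,\dots,k\}$; edges $(c,a_1)$ and $(c,b_1)$; and for each $i\in\{1,\dots,k-1\}$ either the edges $(a_i,a_{i+1})$ and $(b_i,b_{i+1})$, or the edges $(a_i,b_{i+1})$ and $(b_i,a_{i+1})$. It has $k$ reticulations neatly at the top if moreover for every $i\in\{1,\dots,k-1\}$ the edges $(a_i,a_{i+1})$ and $(b_i,b_{i+1})$ are present. Subdividing an edge $(a,b)$ means replacing it by a new node $x$ and edges $(a,x),(x,b)$; suppressing an indegree-1 outdegree-1 node $x$ with parent $a$ and child $b$ means deleting $x$ and its edges and adding $(a,b)$. Head move of $(u,v)$ ($v$ a reticulation) to an edge $f$: delete $(u,v)$, subdivide $f$ with new node $v'$, suppress $v$, add $(u,v')$; valid only if the result is a phylogenetic network. *)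

theory Defs
  imports Main
begin

text \<open>A network is represented by its (finite) set of directed edges; its nodes are the
endpoints of edges (every node of a phylogenetic network with at least two leaves is
incident to some edge).\<close>

definition verts :: "('v \<times> 'v) set \<Rightarrow> 'v set" where
  "verts E = fst ` E \<union> snd ` E"

definition indeg :: "('v \<times> 'v) set \<Rightarrow> 'v \<Rightarrow> nat" where
  "indeg E v = card {u. (u, v) \<in> E}"

definition outdeg :: "('v \<times> 'v) set \<Rightarrow> 'v \<Rightarrow> nat" where
  "outdeg E v = card {w. (v, w) \<in> E}"

definition is_root :: "('v \<times> 'v) set \<Rightarrow> 'v \<Rightarrow> bool" where
  "is_root E v \<longleftrightarrow> v \<in> verts E \<and> indeg E v = 0 \<and> outdeg E v = 1"

definition is_leaf :: "('v \<times> 'v) set \<Rightarrow> 'v \<Rightarrow> bool" where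
  "is_leaf E v \<longleftrightarrow> v \<in> verts E \<and> indeg E v = 1 \<and> outdeg E v = 0"

definition is_split :: "('v \<times> 'v) set \<Rightarrow> 'v \<Rightarrow> bool" where
  "is_split E v \<longleftrightarrow> v \<in> verts E \<and> indeg E v = 1 \<and> outdeg E v = 2"

definition is_ret :: "('v \<times> 'v) set \<Rightarrow> 'v \<Rightarrow> bool" where
  "is_ret E v \<longleftrightarrow> v \<in> verts E \<and> indeg E v = 2 \<and> outdeg E v = 1"

definition phylo_net :: "'x set \<Rightarrow> ('v \<Rightarrow> 'x) \<Rightarrow> ('v \<times> 'v) set \<Rightarrow> bool" where
  "phylo_net X lab E \<longleftrightarrow>
     finite E \<and> finite X \<and> card X \<ge> 2 \<and> acyclic E \<and>
     card {v. is_root E v} = 1 \<and>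
     (\<forall>v \<in> verts E. is_root E v \<or> is_leaf E v \<or> is_split E v \<or> is_ret E v) \<and>
     bij_betw lab {v. is_leaf E v} X"

text \<open>Head move of (u,v) to f = (x,y), using new node v'. p and c are the (unique)
parent and child of v after deleting (u,v) and subdividing f; v is then suppressed.
The move is literal: delete (u,v); subdivide f with v'; suppress v; add (u,v').
Parallel edges must not arise.\<close>
definition head_move :: "('v \<times> 'v) set \<Rightarrow> ('v \<times> 'v) set \<Rightarrow> bool" where
  "head_move E E' \<longleftrightarrow>
    (\<exists>u v x y v' p c.
       (u, v) \<in> E \<and> is_ret E v \<and> (x, y) \<in> E - {(u, v)} \<and>
       v' \<notin> verts (E - {(u, v)}) \<and>
       (let E1 = E - {(u, v)};
            E2 = (E1 - {(x, y)}) \<union> {(x, v'), (v', y)}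
        in {w. (w, v) \<in> E2} = {p} \<and> {w. (v, w) \<in> E2} = {c} \<and>
           (let E3 = (E2 - {(p, v), (v, c)})
            in (p, c) \<notin> E3 \<and> (u, v') \<notin> E3 \<and>
               E' = E3 \<union> {(p, c)} \<union> {(u, v')})))"

definition valid_head_move :: "'x set \<Rightarrow> ('v \<Rightarrow> 'x) \<Rightarrow> ('v \<times> 'v) set \<Rightarrow> ('v \<times> 'v) set \<Rightarrow> bool" where
  "valid_head_move X lab E E' \<longleftrightarrow> head_move E E' \<and> phylo_net X lab E'"

definition top_frame :: "('v \<times> 'v) set \<Rightarrow> nat \<Rightarrow> (nat \<Rightarrow> 'v) \<Rightarrow> (nat \<Rightarrow> 'v) \<Rightarrow> bool" where
  "top_frame E k a b \<longleftrightarrow>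
     (\<exists>r c. is_root E r \<and> (r, c) \<in> E \<and> (c, a 1) \<in> E \<and> (c, b 1) \<in> E \<and>
        inj_on a {1..k} \<and> inj_on b {1..k} \<and> a ` {1..k} \<inter> b ` {1..k} = {} \<and>
        c \<notin> a ` {1..k} \<and> c \<notin> b ` {1..k}) \<and>
     (\<forall>i \<in> {1..k}. (a i, b i) \<in> E)"

definition rets_at_top :: "('v \<times> 'v) set \<Rightarrow> nat \<Rightarrow> (nat \<Rightarrow> 'v) \<Rightarrow> (nat \<Rightarrow> 'v) \<Rightarrow> bool" where
  "rets_at_top E k a b \<longleftrightarrow> top_frame E k a b \<and>
     (\<forall>i \<in> {1..<k}. ((a i, a (i+1)) \<in> E \<and> (b i, b (i+1)) \<in> E) \<or>
                     ((a i, b (i+1)) \<in> E \<and> (b i, a (i+1)) \<in> E))"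

definition rets_neatly_at_top :: "('v \<times> 'v) set \<Rightarrow> nat \<Rightarrow> (nat \<Rightarrow> 'v) \<Rightarrow> (nat \<Rightarrow> 'v) \<Rightarrow> bool" where
  "rets_neatly_at_top E k a b \<longleftrightarrow> top_frame E k a b \<and>
     (\<forall>i \<in> {1..<k}. (a i, a (i+1)) \<in> E \<and> (b i, b (i+1)) \<in> E)"

definition below :: "('v \<times> 'v) set \<Rightarrow> 'v \<Rightarrow> 'v \<Rightarrow> 'v set" where
  "below E x y = {w. (x, w) \<in> E\<^sup>+ \<or> (y, w) \<in> E\<^sup>+} - {x, y}"

end

theory Submission
  imports Defs
begin


abbreviation inN :: "('v \<times> 'v) set \<Rightarrow> 'v \<Rightarrow> 'v set" where "inN E w \<equiv> {u. (u, w) \<in> E}"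
abbreviation outN :: "('v \<times> 'v) set \<Rightarrow> 'v \<Rightarrow> 'v set" where "outN E w \<equiv> {u. (w, u) \<in> E}"

lemma fin_inN: "finite E \<Longrightarrow> finite (inN E w)"
  by (rule finite_subset[of _ "fst ` E"]) force+
lemma fin_outN: "finite E \<Longrightarrow> finite (outN E w)"
  by (rule finite_subset[of _ "snd ` E"]) force+

lemma verts_deg: "finite E \<Longrightarrow> w \<in> verts E \<longleftrightarrow> indeg E w \<noteq> 0 \<or> outdeg E w \<noteq> 0"
proof -
  assume f: "finite E"
  have "w \<in> verts E \<longleftrightarrow> inN E w \<noteq> {} \<or> outN E w \<noteq> {}" unfolding verts_def by force
  thus ?thesis using fin_inN[OF f, of w] fin_outN[OF f, of w] unfolding indeg_def outdeg_def by auto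
qed

lemma edge_verts: "(u,w) \<in> E \<Longrightarrow> u \<in> verts E \<and> w \<in> verts E"
  unfolding verts_def by force

lemma classify: "phylo_net X lab E \<Longrightarrow> w \<in> verts E \<Longrightarrow> (indeg E w = 0 \<and> outdeg E w = 1) \<or> (indeg E w = 1 \<and> outdeg E w = 0) \<or> (indeg E w = 1 \<and> outdeg E w = 2) \<or> (indeg E w = 2 \<and> outdeg E w = 1)"
  unfolding phylo_net_def is_root_def is_leaf_def is_split_def is_ret_def by blast

lemma pn_fin: "phylo_net X lab E \<Longrightarrow> finite E" unfolding phylo_net_def by blast
lemma pn_acyc: "phylo_net X lab E \<Longrightarrow> acyclic E" unfolding phylo_net_def by blast

lemma split_of:
  assumes "phylo_net X lab E" "(w,u1)\<in>E" "(w,u2)\<in>E" "u1\<noteq>u2"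
  shows "indeg E w = 1 \<and> outN E w = {u1,u2}"
proof -
  have f: "finite E" using pn_fin[OF assms(1)] .
  have v: "w \<in> verts E" using edge_verts[OF assms(2)] by blast
  have sub: "{u1,u2} \<subseteq> outN E w" using assms by auto
  have "2 \<le> outdeg E w" unfolding outdeg_def using card_mono[OF fin_outN[OF f] sub] assms(4) by simp
  with classify[OF assms(1) v] have a: "indeg E w = 1" "outdeg E w = 2" by auto
  moreover have "outN E w = {u1,u2}" using card_subset_eq[OF fin_outN[OF f] sub] a(2) assms(4) unfolding outdeg_def by simp
  ultimately show ?thesis by simp
qed

lemma ret_of:
  assumes "phylo_net X lab E" "(u1,w)\<in>E" "(u2,w)\<in>E" "u1\<noteq>u2"
  shows "outdeg E w = 1 \<and> inN E w = {u1,u2}"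
proof -
  have f: "finite E" using pn_fin[OF assms(1)] .
  have v: "w \<in> verts E" using edge_verts[OF assms(2)] by blast
  have sub: "{u1,u2} \<subseteq> inN E w" using assms by auto
  have "2 \<le> indeg E w" unfolding indeg_def using card_mono[OF fin_inN[OF f] sub] assms(4) by simp
  with classify[OF assms(1) v] have a: "indeg E w = 2" "outdeg E w = 1" by auto
  moreover have "inN E w = {u1,u2}" using card_subset_eq[OF fin_inN[OF f] sub] a(1) assms(4) unfolding indeg_def by simp
  ultimately show ?thesis by simp
qed

lemma one_in: assumes "phylo_net X lab E" "indeg E w = 1" "(u,w)\<in>E" shows "inN E w = {u}"
proof -
  obtain z where z: "inN E w = {z}" using assms(2) unfolding indeg_def by (rule card_1_singletonE)
  with assms(3) show ?thesis by auto
qed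
lemma one_out: assumes "phylo_net X lab E" "outdeg E w = 1" "(w,u)\<in>E" shows "outN E w = {u}"
proof -
  obtain z where z: "outN E w = {z}" using assms(2) unfolding outdeg_def by (rule card_1_singletonE)
  with assms(3) show ?thesis by auto
qed
lemma zero_in: assumes "phylo_net X lab E" "indeg E w = 0" shows "(u,w) \<notin> E"
proof -
  have "finite (inN E w)" using fin_inN[OF pn_fin[OF assms(1)]] .
  with assms(2) have "inN E w = {}" unfolding indeg_def by simp
  thus ?thesis by auto
qed

lemma acyc_neq: "acyclic E \<Longrightarrow> (x,y) \<in> E\<^sup>+ \<Longrightarrow> x \<noteq> y"
  unfolding acyclic_def by auto

definition ladder :: "('v \<times> 'v) set \<Rightarrow> nat \<Rightarrow> (nat \<Rightarrow> 'v) \<Rightarrow> (nat \<Rightarrow> 'v) \<Rightarrow> 'v \<Rightarrow> 'v \<Rightarrow> bool" where "ladder E k a b r c \<longleftrightarrow> is_root E r \<and> (r,c)\<in>E \<and> (c,a 1)\<in>E \<and> (c,b 1)\<in>E \<and>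
  inj_on a {1..k} \<and> inj_on b {1..k} \<and> a`{1..k} \<inter> b`{1..k} = {} \<and> c\<notin>a`{1..k} \<and> c\<notin>b`{1..k} \<and>
  (\<forall>i\<in>{1..k}. (a i,b i)\<in>E) \<and>
  (\<forall>i\<in>{1..<k}. ((a i, a (i+1)) \<in> E \<and> (b i, b (i+1)) \<in> E) \<or> ((a i, b (i+1)) \<in> E \<and> (b i, a (i+1)) \<in> E))"

lemma ladderD: assumes "ladder E k a b r c"
  shows "is_root E r" "(r,c)\<in>E" "(c,a 1)\<in>E" "(c,b 1)\<in>E"
  "inj_on a {1..k}" "inj_on b {1..k}" "a`{1..k} \<inter> b`{1..k} = {}" "c\<notin>a`{1..k}" "c\<notin>b`{1..k}"
  "\<And>i. i\<in>{1..k} \<Longrightarrow> (a i,b i)\<in>E"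
  "\<And>i. i\<in>{1..<k} \<Longrightarrow> ((a i, a (i+1)) \<in> E \<and> (b i, b (i+1)) \<in> E) \<or> ((a i, b (i+1)) \<in> E \<and> (b i, a (i+1)) \<in> E)"
  using assms unfolding ladder_def by blast+

lemma ladder_iff: "rets_at_top E k a b \<longleftrightarrow> (\<exists>r c. ladder E k a b r c)"
  unfolding rets_at_top_def top_frame_def ladder_def by blast

lemma ladder_neq:
  assumes "ladder E k a b r c" "i \<in> {1..k}" "j \<in> {1..k}"
  shows "(a i = a j \<longleftrightarrow> i = j)" "(b i = b j \<longleftrightarrow> i = j)" "a i \<noteq> b j" "c \<noteq> a i" "c \<noteq> b i"
proof -
  note L = ladderD[OF assms(1)]
  show "(a i = a j \<longleftrightarrow> i = j)" using L(5) assms(2,3) unfolding inj_on_def by blast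
  show "(b i = b j \<longleftrightarrow> i = j)" using L(6) assms(2,3) unfolding inj_on_def by blast
  show "a i \<noteq> b j" using L(7) assms(2,3) by blast
  show "c \<noteq> a i" using L(8) assms(2) by blast
  show "c \<noteq> b i" using L(9) assms(2) by blast
qed

lemma ladder_pred:
  assumes "ladder E k a b r c" "j \<in> {1..k}"
  shows "\<exists>q. (q, a j) \<in> E \<and> q \<in> insert c (a`{1..<j} \<union> b`{1..<j})"
    "\<exists>q. (q, b j) \<in> E \<and> q \<in> insert c (a`{1..<j} \<union> b`{1..<j})"
proof -
  note L = ladderD[OF assms(1)]
  have "(\<exists>q. (q, a j) \<in> E \<and> q \<in> insert c (a`{1..<j} \<union> b`{1..<j})) \<and>
    (\<exists>q. (q, b j) \<in> E \<and> q \<in> insert c (a`{1..<j} \<union> b`{1..<j}))"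
  proof (cases "j = 1")
    case True
    thus ?thesis using L(3,4) by blast
  next
    case False
    then have j1: "j - 1 \<in> {1..<k}" "j - 1 + 1 = j" "j - 1 \<in> {1..<j}" using assms(2) by auto
    have "((a (j-1), a j) \<in> E \<and> (b (j-1), b j) \<in> E) \<or> ((a (j-1), b j) \<in> E \<and> (b (j-1), a j) \<in> E)"
      using L(11)[OF j1(1)] unfolding j1(2) .
    then show ?thesis
    proof
      assume "(a (j-1), a j) \<in> E \<and> (b (j-1), b j) \<in> E"
      thus ?thesis using j1(3) by blast
    next
      assume "(a (j-1), b j) \<in> E \<and> (b (j-1), a j) \<in> E"
      thus ?thesis using j1(3) by blast
    qed
  qed
  thus "\<exists>q. (q, a j) \<in> E \<and> q \<in> insert c (a`{1..<j} \<union> b`{1..<j})"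
    "\<exists>q. (q, b j) \<in> E \<and> q \<in> insert c (a`{1..<j} \<union> b`{1..<j})" by blast+
qed


definition Lset :: "nat \<Rightarrow> (nat \<Rightarrow> 'v) \<Rightarrow> (nat \<Rightarrow> 'v) \<Rightarrow> 'v \<Rightarrow> 'v \<Rightarrow> 'v set" where
  "Lset k a b r c = insert r (insert c (a`{1..<k} \<union> b`{1..<k}))"

lemma not_in_Lj:
  assumes ld: "ladder E k a b r c" and j: "j \<in> {1..k}"
  shows "a j \<notin> insert c (a`{1..<j} \<union> b`{1..<j})"
proof -
  note N = ladder_neq[OF ld]
  have "a j \<noteq> c" using N(4)[OF j j] by metis
  moreover have "a j \<notin> a`{1..<j}"
  proof
    assume "a j \<in> a`{1..<j}"
    then obtain m where m: "m \<in> {1..<j}" "a j = a m" by blast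
    have "m \<in> {1..k}" using m(1) j by auto
    with N(1)[OF j this] m show False by auto
  qed
  moreover have "a j \<notin> b`{1..<j}"
  proof
    assume "a j \<in> b`{1..<j}"
    then obtain m where m: "m \<in> {1..<j}" "a j = b m" by blast
    have "m \<in> {1..k}" using m(1) j by auto
    with N(3)[OF j this] m show False by auto
  qed
  ultimately show ?thesis by blast
qed

lemma Lj_sub: "j \<le> k \<Longrightarrow> insert c (a`{1..<j} \<union> b`{1..<j}) \<subseteq> Lset k a b r c"
  unfolding Lset_def by auto

lemma L_closed:
  assumes pn: "phylo_net X lab E" and ld: "ladder E k a b r c" and k1: "1 \<le> k"
    and w: "w \<in> Lset k a b r c" and e: "(u,w) \<in> E"
  shows "u \<in> Lset k a b r c"
proof -
  note L = ladderD[OF ld]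
  note N = ladder_neq[OF ld]
  have one: "1 \<in> {1..k}" using k1 by simp
  consider "w = r" | "w = c" | j where "j \<in> {1..<k}" "w = a j" | j where "j \<in> {1..<k}" "w = b j"
    using w unfolding Lset_def by blast
  then show ?thesis
  proof cases
    case 1
    have "indeg E r = 0" using L(1) unfolding is_root_def by blast
    with zero_in[OF pn] e 1 show ?thesis by blast
  next
    case 2
    have "a 1 \<noteq> b 1" using N(3)[OF one one] .
    from split_of[OF pn L(3) L(4) this] have "indeg E c = 1" by blast
    from one_in[OF pn this L(2)] e 2 have "u = r" by auto
    thus ?thesis unfolding Lset_def by blast
  next
    case 3
    have j: "j \<in> {1..k}" "j+1 \<in> {1..k}" using 3(1) by auto
    have ab: "(a j, b j) \<in> E" using L(10)[OF j(1)] .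
    have "indeg E (a j) = 1"
    proof (cases "(a j, a (j+1)) \<in> E")
      case True
      have "b j \<noteq> a (j+1)" using N(3)[OF j(2) j(1)] by metis
      from split_of[OF pn ab True this] show ?thesis by blast
    next
      case False
      then have "(a j, b (j+1)) \<in> E" using L(11)[OF 3(1)] by blast
      moreover have "b j \<noteq> b (j+1)" using N(2)[OF j(1) j(2)] by simp
      ultimately show ?thesis using split_of[OF pn ab] by blast
    qed
    obtain q where q: "(q, a j) \<in> E" "q \<in> insert c (a`{1..<j} \<union> b`{1..<j})" using ladder_pred(1)[OF ld j(1)] by blast
    from one_in[OF pn \<open>indeg E (a j) = 1\<close> q(1)] e 3 have "u = q" by auto
    thus ?thesis using q(2) Lj_sub[of j k c a b r] j(1) by auto
  next
    case 4
    have j: "j \<in> {1..k}" using 4(1) by auto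
    have ab: "(a j, b j) \<in> E" using L(10)[OF j] .
    obtain q where q: "(q, b j) \<in> E" "q \<in> insert c (a`{1..<j} \<union> b`{1..<j})" using ladder_pred(2)[OF ld j] by blast
    have "q \<noteq> a j" using q(2) not_in_Lj[OF ld j] by auto
    from ret_of[OF pn q(1) ab this] have "inN E (b j) = {q, a j}" by blast
    then have "u = q \<or> u = a j" using e 4 by auto
    thus ?thesis using q(2) Lj_sub[of j k c a b r] j 4(1) unfolding Lset_def by auto
  qed
qed

lemma L_trancl:
  assumes pn: "phylo_net X lab E" and ld: "ladder E k a b r c" and k1: "1 \<le> k"
  shows "(s,w) \<in> E\<^sup>+ \<Longrightarrow> w \<in> Lset k a b r c \<Longrightarrow> s \<in> Lset k a b r c"
proof (induction rule: converse_trancl_induct)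
  case (base y)
  then show ?case using L_closed[OF pn ld k1] by blast
next
  case (step y z)
  then show ?case using L_closed[OF pn ld k1] by blast
qed

lemma ak_notL:
  assumes pn: "phylo_net X lab E" and ld: "ladder E k a b r c" and k1: "1 \<le> k"
  shows "a k \<notin> Lset k a b r c" "b k \<notin> Lset k a b r c"
proof -
  note L = ladderD[OF ld]
  note N = ladder_neq[OF ld]
  have kk: "k \<in> {1..k}" using k1 by simp
  have r0: "indeg E r = 0" using L(1) unfolding is_root_def by blast
  obtain q where q: "(q, a k) \<in> E" using ladder_pred(1)[OF ld kk] by blast
  have "a k \<noteq> r" using zero_in[OF pn r0] q by blast
  moreover have "b k \<noteq> r" using zero_in[OF pn r0] L(10)[OF kk] by blast
  moreover have "a k \<noteq> c" "b k \<noteq> c" using N(4,5)[OF kk kk] by metis+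
  moreover have "a k \<notin> a`{1..<k} \<union> b`{1..<k}" using not_in_Lj[OF ld kk] by blast
  moreover have "b k \<notin> a`{1..<k} \<union> b`{1..<k}"
  proof
    assume "b k \<in> a`{1..<k} \<union> b`{1..<k}"
    then obtain m where m: "m \<in> {1..<k}" "b k = a m \<or> b k = b m" by blast
    have mm: "m \<in> {1..k}" using m(1) by auto
    show False using m N(2)[OF kk mm] N(3)[OF mm kk] by auto
  qed
  ultimately show "a k \<notin> Lset k a b r c" "b k \<notin> Lset k a b r c" unfolding Lset_def by blast+
qed

definition RR :: "('v \<times> 'v) set \<Rightarrow> nat \<Rightarrow> (nat \<Rightarrow> 'v) \<Rightarrow> (nat \<Rightarrow> 'v) \<Rightarrow> 'v set" where
  "RR E k a b = insert (a k) (insert (b k) (below E (a k) (b k)))"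

lemma RR_iff: "w \<in> RR E k a b \<longleftrightarrow> w = a k \<or> w = b k \<or> (a k, w) \<in> E\<^sup>+ \<or> (b k, w) \<in> E\<^sup>+"
  unfolding RR_def below_def by auto

lemma L_notRR:
  assumes pn: "phylo_net X lab E" and ld: "ladder E k a b r c" and k1: "1 \<le> k"
    and w: "w \<in> Lset k a b r c"
  shows "w \<notin> RR E k a b"
  using ak_notL[OF pn ld k1] L_trancl[OF pn ld k1 _ w] w unfolding RR_iff by blast



lemma card_swap: "finite S \<Longrightarrow> x \<in> S \<Longrightarrow> v \<notin> S \<Longrightarrow> card (insert v (S - {x})) = card S"
  using card.remove[of S x] card_insert_disjoint[of "S-{x}" v] by auto

lemma RR_verts: "(a k, b k) \<in> E \<Longrightarrow> RR E k a b \<subseteq> verts E"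
proof
  fix w assume e: "(a k, b k) \<in> E" and w: "w \<in> RR E k a b"
  show "w \<in> verts E"
  proof (cases "w = a k \<or> w = b k")
    case True thus ?thesis using edge_verts[OF e] by blast
  next
    case False
    then obtain s where "(s, w) \<in> E\<^sup>+" using w unfolding RR_iff by blast
    then obtain z where "(z, w) \<in> E" by (meson tranclE)
    thus ?thesis using edge_verts[of z w E] by blast
  qed
qed

lemma move:
  assumes pn: "phylo_net X lab E" and ld: "ladder E k a b r c"
    and i1: "1 \<le> i" and ik: "i < k" and cr: "\<not>((a i, a(i+1)) \<in> E \<and> (b i, b(i+1)) \<in> E)"
    and fresh: "v \<notin> verts E"
  shows "\<exists>E'. valid_head_move X lab E E' \<and> ladder E' k a (b(i:=v)) r c \<and>
    (\<forall>j\<in>{1..<k}. (a j, a(j+1)) \<in> E \<and> (b j, b(j+1)) \<in> E \<longrightarrow> (a j, a(j+1)) \<in> E' \<and> ((b(i:=v)) j, (b(i:=v)) (j+1)) \<in> E') \<and>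
    (a i, a(i+1)) \<in> E' \<and> ((b(i:=v)) i, (b(i:=v))(i+1)) \<in> E' \<and>
    {e \<in> E'. fst e \<in> RR E k a b} = {e \<in> E. fst e \<in> RR E k a b}"
proof -
  note L = ladderD[OF ld]
  note N = ladder_neq[OF ld]
  have k1: "1 \<le> k" using i1 ik by simp
  have fin: "finite E" using pn_fin[OF pn] .
  have ac: "acyclic E" using pn_acyc[OF pn] .
  have ii: "i \<in> {1..k}" "i+1 \<in> {1..k}" "i \<in> {1..<k}" using i1 ik by auto
  define x y n1 n2 where "x = a i" and "y = b i" and "n1 = a (i+1)" and "n2 = b (i+1)"
  have crossed: "(x,n2) \<in> E" "(y,n1) \<in> E" using L(11)[OF ii(3)] cr unfolding x_def y_def n1_def n2_def by blast+
  have xy: "(x,y) \<in> E" and n12: "(n1,n2) \<in> E" using L(10)[OF ii(1)] L(10)[OF ii(2)] unfolding x_def y_def n1_def n2_def by blast+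
  have d1: "x \<noteq> y" "x \<noteq> n2" "y \<noteq> n1" "n1 \<noteq> n2"
    unfolding x_def y_def n1_def n2_def
    using N(3)[OF ii(1) ii(1)] N(3)[OF ii(1) ii(2)] N(3)[OF ii(2) ii(1)] N(3)[OF ii(2) ii(2)] by metis+
  have d2: "x \<noteq> n1" using N(1)[OF ii(1) ii(2)] unfolding x_def n1_def by simp
  have d3: "y \<noteq> n2" using N(2)[OF ii(1) ii(2)] unfolding y_def n2_def by simp
  obtain p where p: "(p, y) \<in> E" "p \<in> insert c (a`{1..<i} \<union> b`{1..<i})"
    using ladder_pred(2)[OF ld ii(1)] unfolding y_def by blast
  have px: "p \<noteq> x" using not_in_Lj[OF ld ii(1)] p(2) unfolding x_def by blast
  from ret_of[OF pn p(1) xy px] have yret: "outdeg E y = 1" "inN E y = {p,x}" by blast+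
  have inY: "\<And>w. (w,y) \<in> E \<longleftrightarrow> w = p \<or> w = x" using yret(2) by auto
  have yout: "outN E y = {n1}" using one_out[OF pn yret(1) crossed(2)] .
  have outY: "\<And>w. (y,w) \<in> E \<longleftrightarrow> w = n1" using yout by auto
  from split_of[OF pn xy crossed(1) d3] have xsplit: "indeg E x = 1" "outN E x = {y,n2}" by blast+
  have outX: "\<And>w. (x,w) \<in> E \<longleftrightarrow> w = y \<or> w = n2" using xsplit(2) by auto
  have py: "p \<noteq> y" using acyc_neq[OF ac r_into_trancl[OF p(1)]] .
  have pn1t: "(p,n1) \<in> E\<^sup>+" using trancl_into_trancl[OF r_into_trancl[OF p(1)] crossed(2)] .
  have pn1: "p \<noteq> n1" using acyc_neq[OF ac pn1t] .
  have pn2: "p \<noteq> n2" using acyc_neq[OF ac trancl_into_trancl[OF pn1t n12]] .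
  have yn2t: "(y,n2) \<in> E\<^sup>+" using trancl_into_trancl[OF r_into_trancl[OF crossed(2)] n12] .
  have xn1t: "(x,n1) \<in> E\<^sup>+" using trancl_into_trancl[OF r_into_trancl[OF xy] crossed(2)] .
  have pL: "p \<in> Lset k a b r c" using p(2) Lj_sub[of i k c a b r] ik by auto
  have xL: "x \<in> Lset k a b r c" and yL: "y \<in> Lset k a b r c" using ii(3) unfolding Lset_def x_def y_def by blast+
  have nR: "p \<notin> RR E k a b" "x \<notin> RR E k a b" "y \<notin> RR E k a b"
    using L_notRR[OF pn ld k1] pL xL yL by blast+
  have kk: "k \<in> {1..k}" using k1 by simp
  have vR: "v \<notin> RR E k a b" using RR_verts[of a k b E, OF L(10)[OF kk]] fresh by blast
  have vE: "\<And>u. (u,v) \<notin> E" "\<And>u. (v,u) \<notin> E" using fresh unfolding verts_def by force+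
  have dv: "v \<noteq> x" "v \<noteq> y" "v \<noteq> n1" "v \<noteq> n2" "v \<noteq> p"
    using fresh edge_verts[OF xy] edge_verts[OF n12] edge_verts[OF p(1)] by auto
  have dv': "x \<noteq> v" "y \<noteq> v" "n1 \<noteq> v" "n2 \<noteq> v" "p \<noteq> v" using dv by metis+
  have xn1: "(x,n1) \<notin> E" using outX[of n1] d1 d2 by auto
  define E' where "E' = (E - {(p,y),(x,n2),(x,y),(y,n1)}) \<union> {(x,v),(v,n2),(x,n1),(p,v)}"
  have finE': "finite E'" unfolding E'_def using fin by simp

  have indy: "indeg E y = 2" unfolding indeg_def using yret(2) px by simp
  have yretE: "is_ret E y" unfolding is_ret_def using edge_verts[OF xy] yret(1) indy by simp
  have hm: "head_move E E'"
    unfolding head_move_def Let_def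
    apply (rule exI[where x=p], rule exI[where x=y], rule exI[where x=x], rule exI[where x=n2],
           rule exI[where x=v], rule exI[where x=x], rule exI[where x=n1])
    apply (intro conjI)
    subgoal by (rule p(1))
    subgoal by (rule yretE)
    subgoal using crossed(1) px by simp
    subgoal using fresh unfolding verts_def by auto
    subgoal
    proof (rule set_eqI)
      fix w
      show "w \<in> {w. (w, y) \<in> E - {(p, y)} - {(x, n2)} \<union> {(x, v), (v, n2)}} \<longleftrightarrow> w \<in> {x}"
        using inY[of w] d3 dv(2) px by auto
    qed
    subgoal using outY d1 d3 dv px py by auto
    subgoal using xn1 dv d1 d2 by auto
    subgoal using vE dv px by auto
    subgoal unfolding E'_def using dv d1 d2 d3 px py by auto
    done
  have in_v: "inN E' v = {x,p}" unfolding E'_def using vE dv px by auto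
  have out_v: "outN E' v = {n2}" unfolding E'_def using vE dv by auto
  have in_y: "inN E' y = {}" unfolding E'_def using inY dv d1 d3 by auto
  have out_y: "outN E' y = {}" unfolding E'_def using outY dv d1 px py by auto
  have in_eq: "\<And>w. w \<noteq> v \<Longrightarrow> w \<noteq> y \<Longrightarrow> inN E' w = (if w = n2 then insert v (inN E n2 - {x})
      else if w = n1 then insert x (inN E n1 - {y}) else inN E w)"
    unfolding E'_def using d1 d2 d3 dv by auto
  have out_eq: "\<And>w. w \<noteq> v \<Longrightarrow> w \<noteq> y \<Longrightarrow> outN E' w = (if w = x then {v,n1}
      else if w = p then insert v (outN E p - {y}) else outN E w)"
    unfolding E'_def using d1 d2 d3 dv px py outX by auto
  have deg: "\<And>w. w \<noteq> v \<Longrightarrow> w \<noteq> y \<Longrightarrow> indeg E' w = indeg E w \<and> outdeg E' w = outdeg E w"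
  proof -
    fix w assume w: "w \<noteq> v" "w \<noteq> y"
    have "indeg E' w = indeg E w"
    proof -
      have "card (inN E' w) = card (inN E w)"
      proof (cases "w = n2")
        case True
        then show ?thesis using in_eq[OF w] card_swap[OF fin_inN[OF fin], of x n2 v] crossed(1) vE by simp
      next
        case False
        show ?thesis
        proof (cases "w = n1")
          case True
          then show ?thesis using in_eq[OF w] False card_swap[OF fin_inN[OF fin], of y n1 x] crossed(2) xn1 by simp
        next
          case False2: False
          then show ?thesis using in_eq[OF w] False by simp
        qed
      qed
      thus ?thesis unfolding indeg_def .
    qed
    moreover have "outdeg E' w = outdeg E w"
    proof -
      have "card (outN E' w) = card (outN E w)"
      proof (cases "w = x")
        case True
        then show ?thesis using out_eq[OF w] xsplit(2) dv d3 by simp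
      next
        case False
        show ?thesis
        proof (cases "w = p")
          case True
          then show ?thesis using out_eq[OF w] False card_swap[OF fin_outN[OF fin], of y p v] p(1) vE by simp
        next
          case False2: False
          then show ?thesis using out_eq[OF w] False by simp
        qed
      qed
      thus ?thesis unfolding outdeg_def .
    qed
    ultimately show "indeg E' w = indeg E w \<and> outdeg E' w = outdeg E w" by blast
  qed
  have vertsEq: "\<And>w. w \<noteq> v \<Longrightarrow> w \<noteq> y \<Longrightarrow> (w \<in> verts E' \<longleftrightarrow> w \<in> verts E)"
    using verts_deg[OF finE'] verts_deg[OF fin] deg by metis
  have degv: "indeg E' v = 2" "outdeg E' v = 1" unfolding indeg_def outdeg_def using in_v out_v px dv by auto
  have vV: "v \<in> verts E'" unfolding E'_def verts_def by force
  have yV: "y \<notin> verts E'" using in_y out_y unfolding verts_def by force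
  have stat: "\<And>w. w \<noteq> v \<Longrightarrow> w \<noteq> y \<Longrightarrow> (is_root E' w \<longleftrightarrow> is_root E w) \<and> (is_leaf E' w \<longleftrightarrow> is_leaf E w)
     \<and> (is_split E' w \<longleftrightarrow> is_split E w) \<and> (is_ret E' w \<longleftrightarrow> is_ret E w)"
    unfolding is_root_def is_leaf_def is_split_def is_ret_def using deg vertsEq by simp
  have rootEq: "\<And>w. is_root E' w \<longleftrightarrow> is_root E w"
  proof -
    fix w show "is_root E' w \<longleftrightarrow> is_root E w"
    proof (cases "w = v \<or> w = y")
      case True
      then show ?thesis unfolding is_root_def using degv fresh yV indy by auto
    next
      case False then show ?thesis using stat by blast
    qed
  qed
  have leafEq: "\<And>w. is_leaf E' w \<longleftrightarrow> is_leaf E w"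
  proof -
    fix w show "is_leaf E' w \<longleftrightarrow> is_leaf E w"
    proof (cases "w = v \<or> w = y")
      case True
      then show ?thesis unfolding is_leaf_def using degv fresh yV indy by auto
    next
      case False then show ?thesis using stat by blast
    qed
  qed
  have acE': "acyclic E'"
  proof -
    define \<phi> where "\<phi> w = (if w = v then y else w)" for w
    have edge: "(\<phi> s, \<phi> t) \<in> E\<^sup>+" if "(s,t) \<in> E'" for s t
    proof -
      have "(s,t) \<in> E - {(p,y),(x,n2),(x,y),(y,n1)} \<or> (s,t) = (x,v) \<or> (s,t) = (v,n2) \<or> (s,t) = (x,n1) \<or> (s,t) = (p,v)"
        using that unfolding E'_def by blast
      then show ?thesis
      proof (elim disjE)
        assume h: "(s,t) \<in> E - {(p,y),(x,n2),(x,y),(y,n1)}"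
        then have "s \<noteq> v" "t \<noteq> v" using vE by auto
        then show ?thesis using h unfolding \<phi>_def by auto
      qed (auto simp: \<phi>_def dv dv' xy p(1) yn2t xn1t)
    qed
    have tr: "(\<phi> s, \<phi> t) \<in> E\<^sup>+" if "(s,t) \<in> E'\<^sup>+" for s t
      using that
    proof (induction rule: trancl_induct)
      case (base t) show ?case by (rule edge[OF base])
    next
      case (step t u) show ?case by (rule trancl_trans[OF step.IH edge[OF step.hyps(2)]])
    qed
    show ?thesis unfolding acyclic_def
    proof (intro allI notI)
      fix s assume "(s,s) \<in> E'\<^sup>+"
      then have "(\<phi> s, \<phi> s) \<in> E\<^sup>+" by (rule tr)
      with ac show False unfolding acyclic_def by auto
    qed
  qed
  have classE': "\<forall>w \<in> verts E'. is_root E' w \<or> is_leaf E' w \<or> is_split E' w \<or> is_ret E' w"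
  proof
    fix w assume w: "w \<in> verts E'"
    show "is_root E' w \<or> is_leaf E' w \<or> is_split E' w \<or> is_ret E' w"
    proof (cases "w = v")
      case True then show ?thesis unfolding is_ret_def using degv vV by simp
    next
      case False
      then have wy: "w \<noteq> y" using w yV by auto
      then have "w \<in> verts E" using vertsEq False w by blast
      then have "is_root E w \<or> is_leaf E w \<or> is_split E w \<or> is_ret E w" using pn unfolding phylo_net_def by blast
      then show ?thesis using stat[OF False wy] by blast
    qed
  qed
  have rs: "Collect (is_root E') = Collect (is_root E)" using rootEq by auto
  have ls: "Collect (is_leaf E') = Collect (is_leaf E)" using leafEq by auto
  have pnE': "phylo_net X lab E'"
    using pn finE' acE' classE' unfolding phylo_net_def rs ls by simp
  have vhm: "valid_head_move X lab E E'" unfolding valid_head_move_def using hm pnE' by blast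
  define b' where "b' = b(i:=v)"
  have b'_simp: "\<And>j. b' j = (if j = i then v else b j)" unfolding b'_def by simp
  have keep: "\<And>s t. (s,t) \<in> E \<Longrightarrow> s \<noteq> x \<Longrightarrow> s \<noteq> y \<Longrightarrow> (s = p \<Longrightarrow> t \<noteq> y) \<Longrightarrow> (s,t) \<in> E'"
    unfolding E'_def by auto
  have keepT: "\<And>s t. (s,t) \<in> E \<Longrightarrow> t \<noteq> y \<Longrightarrow> t \<noteq> n1 \<Longrightarrow> t \<noteq> n2 \<Longrightarrow> (s,t) \<in> E'"
    unfolding E'_def by auto
  have one: "1 \<in> {1..k}" using k1 by simp
  have rootr: "is_root E' r" using rootEq L(1) by blast
  have rc: "(r,c) \<in> E'"
    using keepT[OF L(2)] N(5)[OF ii(1) ii(1)] N(4)[OF ii(2) ii(2)] N(5)[OF ii(2) ii(2)]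
    unfolding y_def n1_def n2_def by metis
  have ca1: "(c, a 1) \<in> E'"
  proof -
    have "a 1 \<noteq> n1" using N(1)[OF one ii(2)] i1 unfolding n1_def by simp
    moreover have "a 1 \<noteq> y" "a 1 \<noteq> n2" using N(3)[OF one ii(1)] N(3)[OF one ii(2)] unfolding y_def n2_def by metis+
    ultimately show ?thesis using keepT[OF L(3)] by blast
  qed
  have cb1: "(c, b' 1) \<in> E'"
  proof (cases "i = 1")
    case True
    then have "(c, y) \<in> E" using L(4) unfolding y_def by simp
    moreover have "c \<noteq> x" using N(4)[OF ii(1) ii(1)] unfolding x_def .
    ultimately have "c = p" using inY[of c] by blast
    moreover have "b' 1 = v" using True b'_simp by simp
    ultimately show ?thesis unfolding E'_def by simp
  next
    case False
    have "b 1 \<noteq> y" using N(2)[OF one ii(1)] False unfolding y_def by simp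
    moreover have "b 1 \<noteq> n1" using N(3)[OF ii(2) one] unfolding n1_def by metis
    moreover have "b 1 \<noteq> n2" using N(2)[OF one ii(2)] i1 unfolding n2_def by simp
    moreover have "b' 1 = b 1" using False b'_simp by simp
    ultimately show ?thesis using keepT[OF L(4)] by simp
  qed
  have vb: "v \<notin> b`{1..k}" "v \<notin> a`{1..k}"
  proof -
    show "v \<notin> b`{1..k}"
    proof
      assume "v \<in> b`{1..k}"
      then obtain j where j: "j \<in> {1..k}" "v = b j" by blast
      show False using edge_verts[OF L(10)[OF j(1)]] j(2) fresh by simp
    qed
    show "v \<notin> a`{1..k}"
    proof
      assume "v \<in> a`{1..k}"
      then obtain j where j: "j \<in> {1..k}" "v = a j" by blast
      show False using edge_verts[OF L(10)[OF j(1)]] j(2) fresh by simp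
    qed
  qed
  have injb: "inj_on b' {1..k}" unfolding b'_def by (rule inj_on_fun_updI[OF L(6) vb(1)])
  have img: "b'`{1..k} \<subseteq> insert v (b`{1..k})" unfolding b'_def by auto
  have disj: "a`{1..k} \<inter> b'`{1..k} = {}" using img L(7) vb(2) by blast
  have cv: "c \<noteq> v" using edge_verts[OF L(2)] fresh by auto
  have cnot: "c \<notin> b'`{1..k}" using img L(9) cv by blast
  have rungs: "\<forall>j\<in>{1..k}. (a j, b' j) \<in> E'"
  proof
    fix j assume j: "j \<in> {1..k}"
    show "(a j, b' j) \<in> E'"
    proof (cases "j = i")
      case True then show ?thesis using b'_simp unfolding E'_def x_def by simp
    next
      case False
      have "a j \<noteq> x" using N(1)[OF j ii(1)] False unfolding x_def by simp
      moreover have "a j \<noteq> y" using N(3)[OF j ii(1)] unfolding y_def .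
      moreover have "b j \<noteq> y" using N(2)[OF j ii(1)] False unfolding y_def by simp
      ultimately show ?thesis using keep[OF L(10)[OF j]] b'_simp False by simp
    qed
  qed
  have SC: "((a j, a(j+1)) \<in> E \<and> (b j, b(j+1)) \<in> E \<longrightarrow> (a j, a(j+1)) \<in> E' \<and> (b' j, b'(j+1)) \<in> E') \<and>
            ((a j, b(j+1)) \<in> E \<and> (b j, a(j+1)) \<in> E \<longrightarrow> (a j, b'(j+1)) \<in> E' \<and> (b' j, a(j+1)) \<in> E')"
    if j: "j \<in> {1..<k}" "j \<noteq> i" for j
  proof -
    have jj: "j \<in> {1..k}" "j+1 \<in> {1..k}" using j(1) by auto
    have bj: "b' j = b j" using b'_simp j(2) by simp
    have ajx: "a j \<noteq> x" using N(1)[OF jj(1) ii(1)] j(2) unfolding x_def by simp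
    have ajy: "a j \<noteq> y" using N(3)[OF jj(1) ii(1)] unfolding y_def .
    have bjx: "b j \<noteq> x" using N(3)[OF ii(1) jj(1)] unfolding x_def by metis
    have bjy: "b j \<noteq> y" using N(2)[OF jj(1) ii(1)] j(2) unfolding y_def by simp
    have xt: "x \<noteq> y" "x \<noteq> n1" "x \<noteq> n2" using d1 d2 by auto
    show ?thesis
    proof (cases "j+1 = i")
      case True
      have b1: "b' (j+1) = v" using True b'_simp by simp
      have ai: "a (j+1) = x" "b (j+1) = y" using True unfolding x_def y_def by simp_all
      show ?thesis
      proof (intro conjI impI)
        assume h: "(a j, a(j+1)) \<in> E \<and> (b j, b(j+1)) \<in> E"
        show "(a j, a(j+1)) \<in> E'" using keepT[of "a j" x] h ai xt by simp
        have "b j = p" using h ai inY[of "b j"] bjx by simp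
        then show "(b' j, b'(j+1)) \<in> E'" using bj b1 unfolding E'_def by simp
      next
        assume h: "(a j, b(j+1)) \<in> E \<and> (b j, a(j+1)) \<in> E"
        have "a j = p" using h ai inY[of "a j"] ajx by simp
        then show "(a j, b'(j+1)) \<in> E'" using b1 unfolding E'_def by simp
        show "(b' j, a(j+1)) \<in> E'" using keepT[of "b j" x] h ai xt bj by simp
      qed
    next
      case False
      have b1: "b' (j+1) = b (j+1)" using False b'_simp by simp
      have a1y: "a (j+1) \<noteq> y" using N(3)[OF jj(2) ii(1)] unfolding y_def .
      have b1y: "b (j+1) \<noteq> y" using N(2)[OF jj(2) ii(1)] False unfolding y_def by simp
      show ?thesis using keep[of "a j" "a(j+1)"] keep[of "b j" "b(j+1)"] keep[of "a j" "b(j+1)"] keep[of "b j" "a(j+1)"]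
        ajx ajy bjx bjy a1y b1y bj b1 by simp
    qed
  qed
  have pat: "\<forall>j\<in>{1..<k}. ((a j, a (j+1)) \<in> E' \<and> (b' j, b' (j+1)) \<in> E') \<or> ((a j, b' (j+1)) \<in> E' \<and> (b' j, a (j+1)) \<in> E')"
  proof
    fix j assume j: "j \<in> {1..<k}"
    show "((a j, a (j+1)) \<in> E' \<and> (b' j, b' (j+1)) \<in> E') \<or> ((a j, b' (j+1)) \<in> E' \<and> (b' j, a (j+1)) \<in> E')"
    proof (cases "j = i")
      case True
      then show ?thesis using b'_simp unfolding E'_def x_def n1_def n2_def by simp
    next
      case False
      then show ?thesis using SC[OF j False] L(11)[OF j] by blast
    qed
  qed
  have ldE': "ladder E' k a b' r c"
    unfolding ladder_def using rootr rc ca1 cb1 L(5) injb disj L(8) cnot rungs pat by blast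
  have strt: "\<forall>j\<in>{1..<k}. (a j, a(j+1)) \<in> E \<and> (b j, b(j+1)) \<in> E \<longrightarrow> (a j, a(j+1)) \<in> E' \<and> (b' j, b' (j+1)) \<in> E'"
  proof (intro ballI impI)
    fix j assume j: "j \<in> {1..<k}" and h: "(a j, a(j+1)) \<in> E \<and> (b j, b(j+1)) \<in> E"
    have "j \<noteq> i" using h cr by blast
    then show "(a j, a(j+1)) \<in> E' \<and> (b' j, b' (j+1)) \<in> E'" using SC[OF j] h by blast
  qed
  have stri: "(a i, a(i+1)) \<in> E' \<and> (b' i, b'(i+1)) \<in> E'" using b'_simp unfolding E'_def x_def n1_def n2_def by simp
  have RRe: "{e \<in> E'. fst e \<in> RR E k a b} = {e \<in> E. fst e \<in> RR E k a b}"
    unfolding E'_def using nR vR by auto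
  show ?thesis
    apply (rule exI[of _ E'])
    using vhm ldE' strt stri RRe unfolding b'_def by blast
qed


lemma reach_mono:
  assumes cl: "\<And>u w. (u,w)\<in>E \<Longrightarrow> u\<in>R \<Longrightarrow> w\<in>R" and sub: "\<And>u w. (u,w)\<in>E \<Longrightarrow> u\<in>R \<Longrightarrow> (u,w)\<in>E'" and s: "s\<in>R"
  shows "(s,w)\<in>E\<^sup>+ \<Longrightarrow> (s,w)\<in>E'\<^sup>+ \<and> w\<in>R"
proof (induction rule: trancl_induct)
  case (base y)
  have "(s,y) \<in> E'" using sub[OF base s] .
  then show ?case using cl[OF base s] by blast
next
  case (step y z)
  have yR: "y \<in> R" using step.IH by blast
  have yz: "(y,z) \<in> E'" using sub[OF step.hyps(2) yR] .
  have "(s,z) \<in> E'\<^sup>+" using trancl_into_trancl[of s y E' z] step.IH yz by blast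
  then show ?case using cl[OF step.hyps(2) yR] by blast
qed

lemma reach_eq:
  assumes cl: "\<And>u w. (u,w)\<in>E \<Longrightarrow> u\<in>R \<Longrightarrow> w\<in>R" and eq: "{e\<in>E'. fst e \<in> R} = {e\<in>E. fst e \<in> R}" and s: "s\<in>R"
  shows "(s,w)\<in>E'\<^sup>+ \<longleftrightarrow> (s,w)\<in>E\<^sup>+"
proof -
  have e1: "(u,w)\<in>E'" if "(u,w)\<in>E" "u\<in>R" for u w
  proof -
    have "(u,w) \<in> {e\<in>E. fst e \<in> R}" using that by simp
    then have "(u,w) \<in> {e\<in>E'. fst e \<in> R}" using eq by simp
    then show ?thesis by simp
  qed
  have e2: "(u,w)\<in>E" if "(u,w)\<in>E'" "u\<in>R" for u w
  proof -
    have "(u,w) \<in> {e\<in>E'. fst e \<in> R}" using that by simp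
    then have "(u,w) \<in> {e\<in>E. fst e \<in> R}" using eq by simp
    then show ?thesis by simp
  qed
  have cl': "\<And>u' w'. (u',w')\<in>E' \<Longrightarrow> u'\<in>R \<Longrightarrow> w'\<in>R" using cl e2 by blast
  show ?thesis
  proof
    assume h: "(s,w)\<in>E'\<^sup>+"
    have "(s,w)\<in>E\<^sup>+ \<and> w \<in> R"
    proof (rule reach_mono[where E="E'" and R=R and E'=E])
      show "\<And>u w. (u,w)\<in>E' \<Longrightarrow> u\<in>R \<Longrightarrow> w\<in>R" by (rule cl')
      show "\<And>u w. (u,w)\<in>E' \<Longrightarrow> u\<in>R \<Longrightarrow> (u,w)\<in>E" by (rule e2)
    qed (rule s, rule h)
    then show "(s,w)\<in>E\<^sup>+" by blast
  next
    assume h: "(s,w)\<in>E\<^sup>+"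
    have "(s,w)\<in>E'\<^sup>+ \<and> w \<in> R"
    proof (rule reach_mono[where E="E" and R=R and E'=E'])
      show "\<And>u w. (u,w)\<in>E \<Longrightarrow> u\<in>R \<Longrightarrow> w\<in>R" by (rule cl)
      show "\<And>u w. (u,w)\<in>E \<Longrightarrow> u\<in>R \<Longrightarrow> (u,w)\<in>E'" by (rule e1)
    qed (rule s, rule h)
    then show "(s,w)\<in>E'\<^sup>+" by blast
  qed
qed

lemma RR_closed: assumes e: "(u,w) \<in> E" and u: "u \<in> RR E k a b" shows "w \<in> RR E k a b"
proof -
  have "u = a k \<or> u = b k \<or> (a k, u) \<in> E\<^sup>+ \<or> (b k, u) \<in> E\<^sup>+" using u unfolding RR_iff .
  then have "(a k, w) \<in> E\<^sup>+ \<or> (b k, w) \<in> E\<^sup>+"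
  proof (elim disjE)
    assume "u = a k" then show ?thesis using r_into_trancl[OF e] by simp
  next
    assume "u = b k" then show ?thesis using r_into_trancl[OF e] by simp
  next
    assume "(a k, u) \<in> E\<^sup>+" then show ?thesis using trancl_into_trancl[OF _ e] by blast
  next
    assume "(b k, u) \<in> E\<^sup>+" then show ?thesis using trancl_into_trancl[OF _ e] by blast
  qed
  then show ?thesis unfolding RR_iff by blast
qed

lemma RR_eq:
  assumes eq: "{e\<in>E'. fst e \<in> RR E k a b} = {e\<in>E. fst e \<in> RR E k a b}" and bk: "b' k = b k"
  shows "RR E' k a b' = RR E k a b"
proof (rule set_eqI)
  fix w
  have ak: "a k \<in> RR E k a b" and bk': "b k \<in> RR E k a b" unfolding RR_iff by simp_all
  have "(a k, w) \<in> E'\<^sup>+ \<longleftrightarrow> (a k, w) \<in> E\<^sup>+"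
  proof (rule reach_eq[where R="RR E k a b"])
    show "\<And>u w. (u,w)\<in>E \<Longrightarrow> u\<in>RR E k a b \<Longrightarrow> w\<in>RR E k a b" by (rule RR_closed)
  qed (rule eq, rule ak)
  moreover have "(b k, w) \<in> E'\<^sup>+ \<longleftrightarrow> (b k, w) \<in> E\<^sup>+"
  proof (rule reach_eq[where R="RR E k a b"])
    show "\<And>u w. (u,w)\<in>E \<Longrightarrow> u\<in>RR E k a b \<Longrightarrow> w\<in>RR E k a b" by (rule RR_closed)
  qed (rule eq, rule bk')
  ultimately show "w \<in> RR E' k a b' \<longleftrightarrow> w \<in> RR E k a b" unfolding RR_iff bk by blast
qed

definition cross :: "('v \<times> 'v) set \<Rightarrow> nat \<Rightarrow> (nat \<Rightarrow> 'v) \<Rightarrow> (nat \<Rightarrow> 'v) \<Rightarrow> nat set" where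
  "cross E k a b = {j \<in> {1..<k}. \<not>((a j, a(j+1)) \<in> E \<and> (b j, b(j+1)) \<in> E)}"

lemma neat_of: "rets_at_top E k a b \<Longrightarrow> cross E k a b = {} \<Longrightarrow> rets_neatly_at_top E k a b"
  unfolding rets_at_top_def rets_neatly_at_top_def cross_def by auto

lemma main_ind:
  fixes X :: "'x set" and lab :: "'v \<Rightarrow> 'x" and a :: "nat \<Rightarrow> 'v"
  assumes inf: "infinite (UNIV :: 'v set)" and k1: "1 \<le> k"
  shows "phylo_net X lab E \<Longrightarrow> rets_at_top E k a b \<Longrightarrow> card (cross E k a b) \<le> m \<Longrightarrow>
    \<exists>n\<le>m. \<exists>Es. Es 0 = E \<and> (\<forall>i<n. valid_head_move X lab (Es i) (Es (Suc i))) \<and>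
      (\<exists>b'. rets_neatly_at_top (Es n) k a b' \<and> b' k = b k \<and> RR (Es n) k a b' = RR E k a b \<and>
         {e \<in> Es n. fst e \<in> RR E k a b} = {e \<in> E. fst e \<in> RR E k a b})"
proof (induction m arbitrary: E b)
  case 0
  then have "cross E k a b = {}" using card_eq_0_iff[of "cross E k a b"] unfolding cross_def by auto
  then have "rets_neatly_at_top E k a b" using neat_of 0 by blast
  then show ?case by (intro exI[of _ "0::nat"] conjI exI[of _ "\<lambda>_::nat. E"] exI[of _ b]) simp_all
next
  case (Suc m)
  show ?case
  proof (cases "cross E k a b = {}")
    case True
    then have "rets_neatly_at_top E k a b" using neat_of Suc.prems by blast
    then show ?thesis by (intro exI[of _ "0::nat"] conjI exI[of _ "\<lambda>_::nat. E"] exI[of _ b]) simp_all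
  next
    case False
    then obtain i where i: "i \<in> cross E k a b" by blast
    have i1: "1 \<le> i" and ik: "i < k" and cr: "\<not>((a i, a(i+1)) \<in> E \<and> (b i, b(i+1)) \<in> E)"
      using i unfolding cross_def by auto
    obtain r c where ld: "ladder E k a b r c" using Suc.prems(2) unfolding ladder_iff by blast
    have "finite (verts E)" using pn_fin[OF Suc.prems(1)] unfolding verts_def by simp
    then obtain v where fresh: "v \<notin> verts E" using ex_new_if_finite[OF inf] by blast
    obtain E' where E': "valid_head_move X lab E E'" "ladder E' k a (b(i:=v)) r c"
      "\<forall>j\<in>{1..<k}. (a j, a(j+1)) \<in> E \<and> (b j, b(j+1)) \<in> E \<longrightarrow> (a j, a(j+1)) \<in> E' \<and> ((b(i:=v)) j, (b(i:=v)) (j+1)) \<in> E'"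
      "(a i, a(i+1)) \<in> E' \<and> ((b(i:=v)) i, (b(i:=v))(i+1)) \<in> E'"
      "{e \<in> E'. fst e \<in> RR E k a b} = {e \<in> E. fst e \<in> RR E k a b}"
      using move[OF Suc.prems(1) ld i1 ik cr fresh] by blast
    define b' where "b' = b(i:=v)"
    have pnE': "phylo_net X lab E'" using E'(1) unfolding valid_head_move_def by blast
    have ratE': "rets_at_top E' k a b'" unfolding ladder_iff b'_def using E'(2) by blast
    have sub: "cross E' k a b' \<subseteq> cross E k a b - {i}"
    proof (rule subsetI)
      fix j assume "j \<in> cross E' k a b'"
      then have j: "j \<in> {1..<k}" and nst: "\<not>((a j, a(j+1)) \<in> E' \<and> (b' j, b'(j+1)) \<in> E')"
        unfolding cross_def by auto
      have "j \<noteq> i" using nst E'(4) unfolding b'_def by blast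
      moreover have "\<not>((a j, a(j+1)) \<in> E \<and> (b j, b(j+1)) \<in> E)" using nst E'(3) j unfolding b'_def by blast
      ultimately show "j \<in> cross E k a b - {i}" using j unfolding cross_def by blast
    qed
    have finc: "finite (cross E k a b)" unfolding cross_def by simp
    have "card (cross E' k a b') \<le> card (cross E k a b - {i})"
      using card_mono[OF _ sub] finc by simp
    also have "\<dots> = card (cross E k a b) - 1" using card_Diff_singleton[OF i] .
    finally have cm: "card (cross E' k a b') \<le> m" using Suc.prems(3) by simp
    obtain n' Es' b'' where IH: "n' \<le> m" "Es' 0 = E'" "\<forall>j<n'. valid_head_move X lab (Es' j) (Es' (Suc j))"
      "rets_neatly_at_top (Es' n') k a b''" "b'' k = b' k" "RR (Es' n') k a b'' = RR E' k a b'"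
      "{e \<in> Es' n'. fst e \<in> RR E' k a b'} = {e \<in> E'. fst e \<in> RR E' k a b'}"
      using Suc.IH[OF pnE' ratE' cm] by blast
    have bk: "b' k = b k" unfolding b'_def using ik by simp
    have RReq: "RR E' k a b' = RR E k a b" using RR_eq[of E' E k a b b', OF E'(5) bk] .
    define Es where "Es j = (if j = 0 then E else Es' (j - 1))" for j
    have G1: "Es 0 = E" unfolding Es_def by simp
    have G2: "\<forall>j<Suc n'. valid_head_move X lab (Es j) (Es (Suc j))"
    proof (intro allI impI)
      fix j assume j: "j < Suc n'"
      show "valid_head_move X lab (Es j) (Es (Suc j))"
      proof (cases j)
        case 0 then show ?thesis unfolding Es_def using E'(1) IH(2) by simp
      next
        case (Suc j') then show ?thesis unfolding Es_def using IH(3) j by simp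
      qed
    qed
    have G3: "Suc n' \<le> Suc m" using IH(1) by simp
    have G4: "rets_neatly_at_top (Es (Suc n')) k a b'' \<and> b'' k = b k \<and> RR (Es (Suc n')) k a b'' = RR E k a b \<and>
         {e \<in> Es (Suc n'). fst e \<in> RR E k a b} = {e \<in> E. fst e \<in> RR E k a b}"
    proof -
      have "{e \<in> Es' n'. fst e \<in> RR E k a b} = {e \<in> E. fst e \<in> RR E k a b}"
        using IH(7) E'(5) unfolding RReq by simp
      then show ?thesis using IH(4) IH(5) IH(6) bk RReq unfolding Es_def by simp
    qed
    have "Suc n' \<le> Suc m \<and> (Es 0 = E \<and> (\<forall>j<Suc n'. valid_head_move X lab (Es j) (Es (Suc j))) \<and>
      (rets_neatly_at_top (Es (Suc n')) k a b'' \<and> b'' k = b k \<and> RR (Es (Suc n')) k a b'' = RR E k a b \<and>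
         {e \<in> Es (Suc n'). fst e \<in> RR E k a b} = {e \<in> E. fst e \<in> RR E k a b}))"
      using G1 G2 G3 G4 by blast
    then show ?thesis by blast
  qed
qed


theorem mainTheorem19:
  fixes X :: "'x set" and lab :: "'v \<Rightarrow> 'x" and E :: "('v \<times> 'v) set"
    and k :: nat and a b :: "nat \<Rightarrow> 'v"
  assumes "infinite (UNIV :: 'v set)"
    and "phylo_net X lab E"
    and "1 \<le> k"
    and "rets_at_top E k a b"
  shows "\<exists>n \<le> k. \<exists>Es :: nat \<Rightarrow> ('v \<times> 'v) set.
           Es 0 = E \<and> (\<forall>i < n. valid_head_move X lab (Es i) (Es (Suc i))) \<and>
           (\<exists>a' b'. rets_neatly_at_top (Es n) k a' b' \<and>
              below (Es n) (a' k) (b' k) = below E (a k) (b k) \<and>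
              {e \<in> Es n. fst e \<in> below E (a k) (b k)} = {e \<in> E. fst e \<in> below E (a k) (b k)})"
proof -
  have cc: "card (cross E k a b) \<le> k"
  proof -
    have "cross E k a b \<subseteq> {1..<k}" unfolding cross_def by auto
    then have "card (cross E k a b) \<le> card {1..<k::nat}" by (rule card_mono[rotated]) simp
    thus ?thesis by simp
  qed
  note MI = main_ind[OF assms(1) assms(3)]
  obtain n Es b' where R: "n \<le> k" "Es 0 = E" "\<forall>i<n. valid_head_move X lab (Es i) (Es (Suc i))"
     "rets_neatly_at_top (Es n) k a b'" "b' k = b k" "RR (Es n) k a b' = RR E k a b"
     "{e \<in> Es n. fst e \<in> RR E k a b} = {e \<in> E. fst e \<in> RR E k a b}"
    using MI[OF assms(2) assms(4) cc] by blast
  have belowRR: "\<And>F bb. below F (a k) (bb k) = RR F k a bb - {a k, bb k}" unfolding RR_def below_def by auto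
  have b1: "below (Es n) (a k) (b' k) = below E (a k) (b k)"
    using belowRR[of "Es n" b'] belowRR[of E b] R(5,6) by simp
  have sub: "below E (a k) (b k) \<subseteq> RR E k a b" using belowRR[of E b] by blast
  have b2: "{e \<in> Es n. fst e \<in> below E (a k) (b k)} = {e \<in> E. fst e \<in> below E (a k) (b k)}"
  proof (rule set_eqI)
    fix e
    have "(e \<in> {e \<in> Es n. fst e \<in> RR E k a b}) = (e \<in> {e \<in> E. fst e \<in> RR E k a b})" using R(7) by simp
    then have "(e \<in> Es n \<and> fst e \<in> RR E k a b) = (e \<in> E \<and> fst e \<in> RR E k a b)" by simp
    then show "(e \<in> {e \<in> Es n. fst e \<in> below E (a k) (b k)}) = (e \<in> {e \<in> E. fst e \<in> below E (a k) (b k)})"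
      using sub by auto
  qed
  show ?thesis using R(1,2,3,4) b1 b2 by blast
qed

end
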